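(* Let $\mathcal T$ consist of projective objects and be contravariantly finite in $\mathcal A$, and let $f:X\to Y$ be an epimorphism in $\mathcal A$. Then $\overline f$ is a strong monomorphism in the left triangulated category $\underline{\mathcal A}$ if and only if $\ker(f)\in\mathcal T$.
   Context: $\mathcal A$ is abelian, $\mathcal T$ a full additive subcategory closed under finite direct sums and direct summands; $\underline{\mathcal A}=\mathcal A/\langle\mathcal T\rangle$ is the stable category, $\overline f$ the class of $f$. For $\mathcal T$ contravariantly finite, $\underline{\mathcal A}$ is left triangulated: $\Omega Y=\ker(p_Y)$ for a $\mathcal T$-precover $p_Y:T_Y\to Y$; for $f:X\to Y$ one forms the pullback $Z$ of $f$ and $p_Y$ with projection $g:Z\to X$ and induced $\Omega Y\to Z$; left triangles are diagrams isomorphic to $\Omega Y\to Z\xrightarrow{\overline g}X\xrightarrow{\overline f}Y$. $\overline f$ is a strong monomorphism if there is a left triangle $\Omega Y\to0\to X\xrightarrow{\overline f}Y$. *)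

theory Defs
  imports Main
begin

record ('o, 'm) cat =
  Ob  :: "'o set"
  Ar  :: "'m set"
  dom :: "'m \<Rightarrow> 'o"
  cod :: "'m \<Rightarrow> 'o"
  cmp :: "'m \<Rightarrow> 'm \<Rightarrow> 'm"   \<comment> \<open>cmp g f = g \<circ> f\<close>
  idt :: "'o \<Rightarrow> 'm"
  add :: "'m \<Rightarrow> 'm \<Rightarrow> 'm"
  zer :: "'o \<Rightarrow> 'o \<Rightarrow> 'm"
  neg :: "'m \<Rightarrow> 'm"

definition hom :: "('o,'m) cat \<Rightarrow> 'o \<Rightarrow> 'o \<Rightarrow> 'm set" where
  "hom C X Y = {f \<in> Ar C. dom C f = X \<and> cod C f = Y}"

definition category :: "('o,'m) cat \<Rightarrow> bool" where
  "category C \<longleftrightarrow>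
     (\<forall>f\<in>Ar C. dom C f \<in> Ob C \<and> cod C f \<in> Ob C) \<and>
     (\<forall>X\<in>Ob C. idt C X \<in> hom C X X) \<and>
     (\<forall>X Y Z f g. f \<in> hom C X Y \<longrightarrow> g \<in> hom C Y Z \<longrightarrow> cmp C g f \<in> hom C X Z) \<and>
     (\<forall>W X Y Z f g h. f \<in> hom C W X \<longrightarrow> g \<in> hom C X Y \<longrightarrow> h \<in> hom C Y Z \<longrightarrow>
        cmp C h (cmp C g f) = cmp C (cmp C h g) f) \<and>
     (\<forall>X Y f. f \<in> hom C X Y \<longrightarrow> cmp C (idt C Y) f = f \<and> cmp C f (idt C X) = f)"

definition preadditive :: "('o,'m) cat \<Rightarrow> bool" where
  "preadditive C \<longleftrightarrow> category C \<and>
     (\<forall>X\<in>Ob C. \<forall>Y\<in>Ob C. zer C X Y \<in> hom C X Y) \<and>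
     (\<forall>X Y f g. f \<in> hom C X Y \<longrightarrow> g \<in> hom C X Y \<longrightarrow>
        add C f g \<in> hom C X Y \<and> neg C f \<in> hom C X Y \<and>
        add C f g = add C g f \<and> add C f (zer C X Y) = f \<and> add C f (neg C f) = zer C X Y) \<and>
     (\<forall>X Y f g h. f \<in> hom C X Y \<longrightarrow> g \<in> hom C X Y \<longrightarrow> h \<in> hom C X Y \<longrightarrow>
        add C (add C f g) h = add C f (add C g h)) \<and>
     (\<forall>X Y Z f g g'. f \<in> hom C X Y \<longrightarrow> g \<in> hom C Y Z \<longrightarrow> g' \<in> hom C Y Z \<longrightarrow>
        cmp C (add C g g') f = add C (cmp C g f) (cmp C g' f)) \<and>
     (\<forall>X Y Z f f' h. f \<in> hom C X Y \<longrightarrow> f' \<in> hom C X Y \<longrightarrow> h \<in> hom C Y Z \<longrightarrow>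
        cmp C h (add C f f') = add C (cmp C h f) (cmp C h f'))"

definition zero_obj :: "('o,'m) cat \<Rightarrow> 'o \<Rightarrow> bool" where
  "zero_obj C Z0obj \<longleftrightarrow> Z0obj \<in> Ob C \<and> idt C Z0obj = zer C Z0obj Z0obj"

definition is_biproduct ::
  "('o,'m) cat \<Rightarrow> 'o \<Rightarrow> 'o \<Rightarrow> 'o \<Rightarrow> 'm \<Rightarrow> 'm \<Rightarrow> 'm \<Rightarrow> 'm \<Rightarrow> bool" where
  "is_biproduct C X Y B i1 i2 p1 p2 \<longleftrightarrow>
     X \<in> Ob C \<and> Y \<in> Ob C \<and> B \<in> Ob C \<and>
     i1 \<in> hom C X B \<and> i2 \<in> hom C Y B \<and> p1 \<in> hom C B X \<and> p2 \<in> hom C B Y \<and>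
     cmp C p1 i1 = idt C X \<and> cmp C p2 i2 = idt C Y \<and>
     cmp C p1 i2 = zer C Y X \<and> cmp C p2 i1 = zer C X Y \<and>
     add C (cmp C i1 p1) (cmp C i2 p2) = idt C B"

definition additive :: "('o,'m) cat \<Rightarrow> bool" where
  "additive C \<longleftrightarrow> preadditive C \<and> (\<exists>Z0obj. zero_obj C Z0obj) \<and>
     (\<forall>X\<in>Ob C. \<forall>Y\<in>Ob C. \<exists>B i1 i2 p1 p2. is_biproduct C X Y B i1 i2 p1 p2)"

definition mono :: "('o,'m) cat \<Rightarrow> 'o \<Rightarrow> 'o \<Rightarrow> 'm \<Rightarrow> bool" where
  "mono C X Y f \<longleftrightarrow> f \<in> hom C X Y \<and>
     (\<forall>W g h. g \<in> hom C W X \<longrightarrow> h \<in> hom C W X \<longrightarrow> cmp C f g = cmp C f h \<longrightarrow> g = h)"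

definition epi :: "('o,'m) cat \<Rightarrow> 'o \<Rightarrow> 'o \<Rightarrow> 'm \<Rightarrow> bool" where
  "epi C X Y f \<longleftrightarrow> f \<in> hom C X Y \<and>
     (\<forall>W g h. g \<in> hom C Y W \<longrightarrow> h \<in> hom C Y W \<longrightarrow> cmp C g f = cmp C h f \<longrightarrow> g = h)"

definition is_kernel :: "('o,'m) cat \<Rightarrow> 'o \<Rightarrow> 'o \<Rightarrow> 'm \<Rightarrow> 'o \<Rightarrow> 'm \<Rightarrow> bool" where
  "is_kernel C X Y f K k \<longleftrightarrow> f \<in> hom C X Y \<and> K \<in> Ob C \<and> k \<in> hom C K X \<and>
     cmp C f k = zer C K Y \<and>
     (\<forall>W g. g \<in> hom C W X \<and> cmp C f g = zer C W Y \<longrightarrow>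
        (\<exists>!h. h \<in> hom C W K \<and> cmp C k h = g))"

definition is_cokernel :: "('o,'m) cat \<Rightarrow> 'o \<Rightarrow> 'o \<Rightarrow> 'm \<Rightarrow> 'o \<Rightarrow> 'm \<Rightarrow> bool" where
  "is_cokernel C X Y f Q q \<longleftrightarrow> f \<in> hom C X Y \<and> Q \<in> Ob C \<and> q \<in> hom C Y Q \<and>
     cmp C q f = zer C X Q \<and>
     (\<forall>W g. g \<in> hom C Y W \<and> cmp C g f = zer C X W \<longrightarrow>
        (\<exists>!h. h \<in> hom C Q W \<and> cmp C h q = g))"

definition abelian :: "('o,'m) cat \<Rightarrow> bool" where
  "abelian C \<longleftrightarrow> additive C \<and>
     (\<forall>X Y f. f \<in> hom C X Y \<longrightarrow> (\<exists>K k. is_kernel C X Y f K k)) \<and>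
     (\<forall>X Y f. f \<in> hom C X Y \<longrightarrow> (\<exists>Q q. is_cokernel C X Y f Q q)) \<and>
     (\<forall>X Y f. mono C X Y f \<longrightarrow> (\<exists>Z g. is_kernel C Y Z g X f)) \<and>
     (\<forall>X Y f. epi C X Y f \<longrightarrow> (\<exists>Z g. is_cokernel C Z X g Y f))"

definition closed_additive_subcat :: "('o,'m) cat \<Rightarrow> 'o set \<Rightarrow> bool" where
  "closed_additive_subcat C T \<longleftrightarrow> T \<subseteq> Ob C \<and>
     (\<forall>Z0obj. zero_obj C Z0obj \<longrightarrow> Z0obj \<in> T) \<and>
     (\<forall>X Y B i1 i2 p1 p2. is_biproduct C X Y B i1 i2 p1 p2 \<longrightarrow>
        (B \<in> T \<longleftrightarrow> X \<in> T \<and> Y \<in> T))"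

definition projective :: "('o,'m) cat \<Rightarrow> 'o \<Rightarrow> bool" where
  "projective C P \<longleftrightarrow> P \<in> Ob C \<and>
     (\<forall>M N e g. epi C M N e \<longrightarrow> g \<in> hom C P N \<longrightarrow> (\<exists>h\<in>hom C P M. cmp C e h = g))"

definition T_precover :: "('o,'m) cat \<Rightarrow> 'o set \<Rightarrow> 'o \<Rightarrow> 'o \<Rightarrow> 'm \<Rightarrow> bool" where
  "T_precover C T Y TY p \<longleftrightarrow> TY \<in> T \<and> p \<in> hom C TY Y \<and>
     (\<forall>W t. W \<in> T \<longrightarrow> t \<in> hom C W Y \<longrightarrow> (\<exists>u\<in>hom C W TY. cmp C p u = t))"

definition contravariantly_finite :: "('o,'m) cat \<Rightarrow> 'o set \<Rightarrow> bool" where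
  "contravariantly_finite C T \<longleftrightarrow> (\<forall>Y\<in>Ob C. \<exists>TY p. T_precover C T Y TY p)"

text \<open>Stable category A / \<langle>T\<rangle>: f, g : X \<rightarrow> Y have the same class iff f - g factors
  through an object of T. Stable morphisms are handled via representatives.\<close>
definition stable_eq :: "('o,'m) cat \<Rightarrow> 'o set \<Rightarrow> 'o \<Rightarrow> 'o \<Rightarrow> 'm \<Rightarrow> 'm \<Rightarrow> bool" where
  "stable_eq C T X Y f g \<longleftrightarrow> f \<in> hom C X Y \<and> g \<in> hom C X Y \<and>
     (\<exists>W\<in>T. \<exists>u\<in>hom C X W. \<exists>v\<in>hom C W Y. add C f (neg C g) = cmp C v u)"

definition stable_iso :: "('o,'m) cat \<Rightarrow> 'o set \<Rightarrow> 'o \<Rightarrow> 'o \<Rightarrow> 'm \<Rightarrow> bool" where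
  "stable_iso C T X Y a \<longleftrightarrow> a \<in> hom C X Y \<and>
     (\<exists>b\<in>hom C Y X. stable_eq C T X X (cmp C b a) (idt C X) \<and>
                    stable_eq C T Y Y (cmp C a b) (idt C Y))"

definition is_pullback ::
  "('o,'m) cat \<Rightarrow> 'o \<Rightarrow> 'o \<Rightarrow> 'o \<Rightarrow> 'm \<Rightarrow> 'm \<Rightarrow> 'o \<Rightarrow> 'm \<Rightarrow> 'm \<Rightarrow> bool" where
  "is_pullback C X Y TY f p Z g q \<longleftrightarrow> f \<in> hom C X Y \<and> p \<in> hom C TY Y \<and>
     Z \<in> Ob C \<and> g \<in> hom C Z X \<and> q \<in> hom C Z TY \<and> cmp C f g = cmp C p q \<and>
     (\<forall>W a b. a \<in> hom C W X \<longrightarrow> b \<in> hom C W TY \<longrightarrow> cmp C f a = cmp C p b \<longrightarrow>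
        (\<exists>!h. h \<in> hom C W Z \<and> cmp C g h = a \<and> cmp C q h = b))"

text \<open>Standard left triangle  OmegaY --w--> Z --g--> X --f--> Y  where OmegaY = K is the kernel of a
  T-precover p : TY \<rightarrow> Y, Z is the pullback of f and p, and w is the induced map.\<close>
definition std_left_triangle ::
  "('o,'m) cat \<Rightarrow> 'o set \<Rightarrow> 'o \<Rightarrow> 'o \<Rightarrow> 'o \<Rightarrow> 'o \<Rightarrow> 'm \<Rightarrow> 'm \<Rightarrow> 'm \<Rightarrow> bool" where
  "std_left_triangle C T K Z X Y w g f \<longleftrightarrow>
     (\<exists>TY p k q. T_precover C T Y TY p \<and> is_kernel C TY Y p K k \<and>
        is_pullback C X Y TY f p Z g q \<and>
        w \<in> hom C K Z \<and> cmp C g w = zer C K X \<and> cmp C q w = k)"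

definition left_triangle ::
  "('o,'m) cat \<Rightarrow> 'o set \<Rightarrow> 'o \<Rightarrow> 'o \<Rightarrow> 'o \<Rightarrow> 'o \<Rightarrow> 'm \<Rightarrow> 'm \<Rightarrow> 'm \<Rightarrow> bool" where
  "left_triangle C T K Z X Y a b c \<longleftrightarrow>
     a \<in> hom C K Z \<and> b \<in> hom C Z X \<and> c \<in> hom C X Y \<and>
     (\<exists>K0 Z0 X0 Y0 w g f \<phi>1 \<phi>2 \<phi>3 \<phi>4.
        std_left_triangle C T K0 Z0 X0 Y0 w g f \<and>
        stable_iso C T K K0 \<phi>1 \<and> stable_iso C T Z Z0 \<phi>2 \<and>
        stable_iso C T X X0 \<phi>3 \<and> stable_iso C T Y Y0 \<phi>4 \<and>
        stable_eq C T K Z0 (cmp C w \<phi>1) (cmp C \<phi>2 a) \<and>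
        stable_eq C T Z X0 (cmp C g \<phi>2) (cmp C \<phi>3 b) \<and>
        stable_eq C T X Y0 (cmp C f \<phi>3) (cmp C \<phi>4 c))"

definition strong_mono :: "('o,'m) cat \<Rightarrow> 'o set \<Rightarrow> 'o \<Rightarrow> 'o \<Rightarrow> 'm \<Rightarrow> bool" where
  "strong_mono C T X Y f \<longleftrightarrow> f \<in> hom C X Y \<and>
     (\<exists>TY p K k Z0obj. T_precover C T Y TY p \<and> is_kernel C TY Y p K k \<and> zero_obj C Z0obj \<and>
        left_triangle C T K Z0obj X Y (zer C K Z0obj) (zer C Z0obj X) f)"

end

theory Submission
  imports Defs
begin

lemma ex1_uniq: "\<exists>!x. P x \<Longrightarrow> P a \<Longrightarrow> P b \<Longrightarrow> a = b" by blast

locale pa = fixes C :: "('o,'m) cat" assumes PA: "preadditive C"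
begin

lemma cat: "category C" using PA unfolding preadditive_def by (rule conjunct1)

lemma C1: "\<forall>X Y Z f g. f \<in> hom C X Y \<longrightarrow> g \<in> hom C Y Z \<longrightarrow> cmp C g f \<in> hom C X Z"
  using cat[unfolded category_def] by (elim conjE) assumption
lemma C2: "\<forall>X\<in>Ob C. idt C X \<in> hom C X X"
  using cat[unfolded category_def] by (elim conjE) assumption
lemma C3: "\<forall>W X Y Z f g h. f \<in> hom C W X \<longrightarrow> g \<in> hom C X Y \<longrightarrow> h \<in> hom C Y Z \<longrightarrow>
        cmp C h (cmp C g f) = cmp C (cmp C h g) f"
  using cat[unfolded category_def] by (elim conjE) assumption
lemma C4: "\<forall>X Y f. f \<in> hom C X Y \<longrightarrow> cmp C (idt C Y) f = f \<and> cmp C f (idt C X) = f"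
  using cat[unfolded category_def] by (elim conjE) assumption
lemma C0: "\<forall>f\<in>Ar C. dom C f \<in> Ob C \<and> cod C f \<in> Ob C"
  using cat[unfolded category_def] by (elim conjE) assumption

lemma P1: "\<forall>X\<in>Ob C. \<forall>Y\<in>Ob C. zer C X Y \<in> hom C X Y"
  using PA[unfolded preadditive_def] by (elim conjE) assumption
lemma P2: "\<forall>X Y f g. f \<in> hom C X Y \<longrightarrow> g \<in> hom C X Y \<longrightarrow>
        add C f g \<in> hom C X Y \<and> neg C f \<in> hom C X Y \<and>
        add C f g = add C g f \<and> add C f (zer C X Y) = f \<and> add C f (neg C f) = zer C X Y"
  using PA[unfolded preadditive_def] by (elim conjE) assumption
lemma P3: "\<forall>X Y f g h. f \<in> hom C X Y \<longrightarrow> g \<in> hom C X Y \<longrightarrow> h \<in> hom C X Y \<longrightarrow>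
        add C (add C f g) h = add C f (add C g h)"
  using PA[unfolded preadditive_def] by (elim conjE) assumption
lemma P4: "\<forall>X Y Z f g g'. f \<in> hom C X Y \<longrightarrow> g \<in> hom C Y Z \<longrightarrow> g' \<in> hom C Y Z \<longrightarrow>
        cmp C (add C g g') f = add C (cmp C g f) (cmp C g' f)"
  using PA[unfolded preadditive_def] by (elim conjE) assumption
lemma P5: "\<forall>X Y Z f f' h. f \<in> hom C X Y \<longrightarrow> f' \<in> hom C X Y \<longrightarrow> h \<in> hom C Y Z \<longrightarrow>
        cmp C h (add C f f') = add C (cmp C h f) (cmp C h f')"
  using PA[unfolded preadditive_def] by (elim conjE) assumption

lemma comp_hom: "f \<in> hom C X Y \<Longrightarrow> g \<in> hom C Y Z \<Longrightarrow> cmp C g f \<in> hom C X Z"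
  using C1 by blast
lemma idt_hom: "X \<in> Ob C \<Longrightarrow> idt C X \<in> hom C X X"
  using C2 by blast
lemma zer_hom: "X \<in> Ob C \<Longrightarrow> Y \<in> Ob C \<Longrightarrow> zer C X Y \<in> hom C X Y"
  using P1 by blast
lemma add_hom: "f \<in> hom C X Y \<Longrightarrow> g \<in> hom C X Y \<Longrightarrow> add C f g \<in> hom C X Y"
  using P2 by blast
lemma neg_hom: "f \<in> hom C X Y \<Longrightarrow> neg C f \<in> hom C X Y"
  using P2 by blast
lemma assoc_hom: "f \<in> hom C W X \<Longrightarrow> g \<in> hom C X Y \<Longrightarrow> h \<in> hom C Y Z \<Longrightarrow>
        cmp C h (cmp C g f) = cmp C (cmp C h g) f"
  using C3 by blast
lemma idl_hom: "f \<in> hom C X Y \<Longrightarrow> cmp C (idt C Y) f = f"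
  using C4 by blast
lemma idr_hom: "f \<in> hom C X Y \<Longrightarrow> cmp C f (idt C X) = f"
  using C4 by blast
lemma comm_hom: "f \<in> hom C X Y \<Longrightarrow> g \<in> hom C X Y \<Longrightarrow> add C f g = add C g f"
  using P2 by blast
lemma zr_hom: "f \<in> hom C X Y \<Longrightarrow> add C f (zer C X Y) = f"
  using P2 by blast
lemma negr_hom: "f \<in> hom C X Y \<Longrightarrow> add C f (neg C f) = zer C X Y"
  using P2 by blast
lemma aassoc_hom: "f \<in> hom C X Y \<Longrightarrow> g \<in> hom C X Y \<Longrightarrow> h \<in> hom C X Y \<Longrightarrow>
        add C (add C f g) h = add C f (add C g h)"
  using P3 by blast
lemma dr_hom: "f \<in> hom C X Y \<Longrightarrow> g \<in> hom C Y Z \<Longrightarrow> g' \<in> hom C Y Z \<Longrightarrow>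
        cmp C (add C g g') f = add C (cmp C g f) (cmp C g' f)"
  using P4 by blast
lemma dl_hom: "f \<in> hom C X Y \<Longrightarrow> f' \<in> hom C X Y \<Longrightarrow> h \<in> hom C Y Z \<Longrightarrow>
        cmp C h (add C f f') = add C (cmp C h f) (cmp C h f')"
  using P5 by blast

lemma hom_iff[simp]: "f \<in> hom C X Y \<longleftrightarrow> f \<in> Ar C \<and> dom C f = X \<and> cod C f = Y"
  unfolding hom_def by auto

lemma dom_Ob[simp]: "f \<in> Ar C \<Longrightarrow> dom C f \<in> Ob C"
  using C0 by blast
lemma cod_Ob[simp]: "f \<in> Ar C \<Longrightarrow> cod C f \<in> Ob C"
  using C0 by blast

lemma cmp_Ar[simp]: "f \<in> Ar C \<Longrightarrow> g \<in> Ar C \<Longrightarrow> dom C g = cod C f \<Longrightarrow> cmp C g f \<in> Ar C"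
  and dom_cmp[simp]: "f \<in> Ar C \<Longrightarrow> g \<in> Ar C \<Longrightarrow> dom C g = cod C f \<Longrightarrow> dom C (cmp C g f) = dom C f"
  and cod_cmp[simp]: "f \<in> Ar C \<Longrightarrow> g \<in> Ar C \<Longrightarrow> dom C g = cod C f \<Longrightarrow> cod C (cmp C g f) = cod C g"
  using comp_hom[of f "dom C f" "cod C f" g "cod C g"] by auto

lemma idt_Ar[simp]: "X \<in> Ob C \<Longrightarrow> idt C X \<in> Ar C"
  and dom_idt[simp]: "X \<in> Ob C \<Longrightarrow> dom C (idt C X) = X"
  and cod_idt[simp]: "X \<in> Ob C \<Longrightarrow> cod C (idt C X) = X"
  using idt_hom[of X] by auto

lemma zer_Ar[simp]: "X \<in> Ob C \<Longrightarrow> Y \<in> Ob C \<Longrightarrow> zer C X Y \<in> Ar C"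
  and dom_zer[simp]: "X \<in> Ob C \<Longrightarrow> Y \<in> Ob C \<Longrightarrow> dom C (zer C X Y) = X"
  and cod_zer[simp]: "X \<in> Ob C \<Longrightarrow> Y \<in> Ob C \<Longrightarrow> cod C (zer C X Y) = Y"
  using zer_hom[of X Y] by auto

lemma add_Ar[simp]: "f \<in> Ar C \<Longrightarrow> g \<in> Ar C \<Longrightarrow> dom C g = dom C f \<Longrightarrow> cod C g = cod C f \<Longrightarrow> add C f g \<in> Ar C"
  and dom_add[simp]: "f \<in> Ar C \<Longrightarrow> g \<in> Ar C \<Longrightarrow> dom C g = dom C f \<Longrightarrow> cod C g = cod C f \<Longrightarrow> dom C (add C f g) = dom C f"
  and cod_add[simp]: "f \<in> Ar C \<Longrightarrow> g \<in> Ar C \<Longrightarrow> dom C g = dom C f \<Longrightarrow> cod C g = cod C f \<Longrightarrow> cod C (add C f g) = cod C f"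
  using add_hom[of f "dom C f" "cod C f" g] by auto

lemma neg_Ar[simp]: "f \<in> Ar C \<Longrightarrow> neg C f \<in> Ar C"
  and dom_neg[simp]: "f \<in> Ar C \<Longrightarrow> dom C (neg C f) = dom C f"
  and cod_neg[simp]: "f \<in> Ar C \<Longrightarrow> cod C (neg C f) = cod C f"
  using neg_hom[of f "dom C f" "cod C f"] by auto

lemma cmp_assoc[simp]: "f \<in> Ar C \<Longrightarrow> g \<in> Ar C \<Longrightarrow> h \<in> Ar C \<Longrightarrow> dom C g = cod C f \<Longrightarrow> dom C h = cod C g \<Longrightarrow>
  cmp C (cmp C h g) f = cmp C h (cmp C g f)"
  using assoc_hom[of f "dom C f" "cod C f" g "cod C g" h "cod C h"] by auto

lemma cmp_idt_left[simp]: "f \<in> Ar C \<Longrightarrow> cod C f = Y \<Longrightarrow> cmp C (idt C Y) f = f"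
  using idl_hom[of f "dom C f" "cod C f"] by auto
lemma cmp_idt_right[simp]: "f \<in> Ar C \<Longrightarrow> dom C f = X \<Longrightarrow> cmp C f (idt C X) = f"
  using idr_hom[of f "dom C f" "cod C f"] by auto

lemma add_comm: "f \<in> Ar C \<Longrightarrow> g \<in> Ar C \<Longrightarrow> dom C g = dom C f \<Longrightarrow> cod C g = cod C f \<Longrightarrow> add C f g = add C g f"
  using comm_hom[of f "dom C f" "cod C f" g] by auto

lemma add_assoc[simp]: "f \<in> Ar C \<Longrightarrow> g \<in> Ar C \<Longrightarrow> h \<in> Ar C \<Longrightarrow> dom C g = dom C f \<Longrightarrow> cod C g = cod C f \<Longrightarrow>
   dom C h = dom C f \<Longrightarrow> cod C h = cod C f \<Longrightarrow> add C (add C f g) h = add C f (add C g h)"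
  using aassoc_hom[of f "dom C f" "cod C f" g h] by auto

lemma add_zer_right[simp]: "f \<in> Ar C \<Longrightarrow> dom C f = X \<Longrightarrow> cod C f = Y \<Longrightarrow> add C f (zer C X Y) = f"
  using zr_hom[of f X Y] by auto

lemma add_neg_right[simp]: "f \<in> Ar C \<Longrightarrow> dom C f = X \<Longrightarrow> cod C f = Y \<Longrightarrow> add C f (neg C f) = zer C X Y"
  using negr_hom[of f X Y] by auto

lemma add_zer_left[simp]: "f \<in> Ar C \<Longrightarrow> dom C f = X \<Longrightarrow> cod C f = Y \<Longrightarrow> add C (zer C X Y) f = f"
  by (metis add_comm add_zer_right cod_Ob cod_zer dom_Ob dom_zer zer_Ar)

lemma add_neg_left[simp]: "f \<in> Ar C \<Longrightarrow> dom C f = X \<Longrightarrow> cod C f = Y \<Longrightarrow> add C (neg C f) f = zer C X Y"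
  by (metis add_comm add_neg_right neg_Ar dom_neg cod_neg)

lemma add_left_comm: "f \<in> Ar C \<Longrightarrow> g \<in> Ar C \<Longrightarrow> h \<in> Ar C \<Longrightarrow> dom C g = dom C f \<Longrightarrow> cod C g = cod C f \<Longrightarrow>
   dom C h = dom C f \<Longrightarrow> cod C h = cod C f \<Longrightarrow> add C f (add C g h) = add C g (add C f h)"
  by (metis add_assoc add_comm)

lemmas add_ac = add_comm add_left_comm

lemma distr_left[simp]: "f \<in> Ar C \<Longrightarrow> f' \<in> Ar C \<Longrightarrow> h \<in> Ar C \<Longrightarrow> dom C f' = dom C f \<Longrightarrow> cod C f' = cod C f \<Longrightarrow>
   dom C h = cod C f \<Longrightarrow> cmp C h (add C f f') = add C (cmp C h f) (cmp C h f')"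
  using dl_hom[of f "dom C f" "cod C f" f' h "cod C h"] by auto

lemma distr_right[simp]: "f \<in> Ar C \<Longrightarrow> g \<in> Ar C \<Longrightarrow> g' \<in> Ar C \<Longrightarrow> dom C g' = dom C g \<Longrightarrow> cod C g' = cod C g \<Longrightarrow>
   dom C g = cod C f \<Longrightarrow> cmp C (add C g g') f = add C (cmp C g f) (cmp C g' f)"
  using dr_hom[of f "dom C f" "cod C f" g "cod C g" g'] by auto

lemma add_cancel_left: "f \<in> Ar C \<Longrightarrow> g \<in> Ar C \<Longrightarrow> h \<in> Ar C \<Longrightarrow> dom C g = dom C f \<Longrightarrow> cod C g = cod C f \<Longrightarrow>
   dom C h = dom C f \<Longrightarrow> cod C h = cod C f \<Longrightarrow> add C f g = add C f h \<Longrightarrow> g = h"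
  by (metis add_assoc add_neg_left add_zer_left neg_Ar dom_neg cod_neg)

lemma add_self_zero: "f \<in> Ar C \<Longrightarrow> add C f f = f \<Longrightarrow> f = zer C (dom C f) (cod C f)"
  by (metis add_cancel_left add_zer_right cod_Ob cod_zer dom_Ob dom_zer zer_Ar)

lemma cmp_zer_right[simp]: "h \<in> Ar C \<Longrightarrow> dom C h = Y \<Longrightarrow> X \<in> Ob C \<Longrightarrow> cmp C h (zer C X Y) = zer C X (cod C h)"
proof -
  assume a: "h \<in> Ar C" "dom C h = Y" "X \<in> Ob C"
  have "Y \<in> Ob C" using a by auto
  have "add C (cmp C h (zer C X Y)) (cmp C h (zer C X Y)) = cmp C h (zer C X Y)"
    using a by (metis add_zer_right distr_left dom_Ob zer_Ar dom_zer cod_zer)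
  then show ?thesis using a add_self_zero[of "cmp C h (zer C X Y)"] \<open>Y \<in> Ob C\<close> by simp
qed

lemma cmp_zer_left[simp]: "f \<in> Ar C \<Longrightarrow> cod C f = Y \<Longrightarrow> Z \<in> Ob C \<Longrightarrow> cmp C (zer C Y Z) f = zer C (dom C f) Z"
proof -
  assume a: "f \<in> Ar C" "cod C f = Y" "Z \<in> Ob C"
  have "Y \<in> Ob C" using a by auto
  have "add C (cmp C (zer C Y Z) f) (cmp C (zer C Y Z) f) = cmp C (zer C Y Z) f"
    using a by (metis add_zer_right distr_right cod_Ob zer_Ar dom_zer cod_zer)
  then show ?thesis using a add_self_zero[of "cmp C (zer C Y Z) f"] \<open>Y \<in> Ob C\<close> by simp
qed

lemma neg_unique: "f \<in> Ar C \<Longrightarrow> g \<in> Ar C \<Longrightarrow> dom C g = dom C f \<Longrightarrow> cod C g = cod C f \<Longrightarrow>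
  add C f g = zer C (dom C f) (cod C f) \<Longrightarrow> g = neg C f"
  by (metis add_cancel_left add_neg_right neg_Ar dom_neg cod_neg)

lemma cmp_neg_right[simp]: "f \<in> Ar C \<Longrightarrow> h \<in> Ar C \<Longrightarrow> dom C h = cod C f \<Longrightarrow> cmp C h (neg C f) = neg C (cmp C h f)"
  apply (rule neg_unique)
  apply simp_all
  apply (simp flip: distr_left)
  done

lemma cmp_neg_left[simp]: "f \<in> Ar C \<Longrightarrow> h \<in> Ar C \<Longrightarrow> dom C h = cod C f \<Longrightarrow> cmp C (neg C h) f = neg C (cmp C h f)"
  apply (rule neg_unique)
  apply simp_all
  apply (simp flip: distr_right)
  done

lemma neg_neg[simp]: "f \<in> Ar C \<Longrightarrow> neg C (neg C f) = f"
  by (metis neg_unique add_neg_left neg_Ar dom_neg cod_neg)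

lemma neg_add[simp]: "f \<in> Ar C \<Longrightarrow> g \<in> Ar C \<Longrightarrow> dom C g = dom C f \<Longrightarrow> cod C g = cod C f \<Longrightarrow>
   neg C (add C f g) = add C (neg C f) (neg C g)"
  apply (rule neg_unique[symmetric])
  apply simp_all
  apply (subst add_left_comm[of g "neg C f"])
  apply simp_all
  done

lemma neg_zer[simp]: "X \<in> Ob C \<Longrightarrow> Y \<in> Ob C \<Longrightarrow> neg C (zer C X Y) = zer C X Y"
  by (metis neg_unique add_zer_left zer_Ar dom_zer cod_zer)

lemma add_cancel1[simp]: "f \<in> Ar C \<Longrightarrow> g \<in> Ar C \<Longrightarrow> dom C g = dom C f \<Longrightarrow> cod C g = cod C f \<Longrightarrow>
   add C f (add C (neg C f) g) = g"
  by (simp flip: add_assoc)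
lemma add_cancel2[simp]: "f \<in> Ar C \<Longrightarrow> g \<in> Ar C \<Longrightarrow> dom C g = dom C f \<Longrightarrow> cod C g = cod C f \<Longrightarrow>
   add C (neg C f) (add C f g) = g"
  by (simp flip: add_assoc)


lemma hom_Ob: "x \<in> hom C A B \<Longrightarrow> A \<in> Ob C \<and> B \<in> Ob C"
  by (metis hom_iff dom_Ob cod_Ob)

lemma cmp_assoc_eq: "f \<in> Ar C \<Longrightarrow> g \<in> Ar C \<Longrightarrow> x \<in> Ar C \<Longrightarrow> dom C g = cod C f \<Longrightarrow> cod C x = dom C f \<Longrightarrow>
  cmp C g f = h \<Longrightarrow> cmp C g (cmp C f x) = cmp C h x"
  by (metis cmp_assoc)

lemma kernel_hom: "is_kernel C X Y f K k \<Longrightarrow> k \<in> hom C K X \<and> f \<in> hom C X Y \<and> cmp C f k = zer C K Y \<and> K \<in> Ob C"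
  unfolding is_kernel_def by (elim conjE) (intro conjI; assumption)


lemma kernel_U: "is_kernel C X Y f K k \<Longrightarrow> (\<forall>W g. g \<in> hom C W X \<and> cmp C f g = zer C W Y \<longrightarrow> (\<exists>!h. h \<in> hom C W K \<and> cmp C k h = g))"
  unfolding is_kernel_def by (elim conjE) assumption

lemma kernel_mono: "is_kernel C X Y f K k \<Longrightarrow> h1 \<in> hom C W K \<Longrightarrow> h2 \<in> hom C W K \<Longrightarrow>
   cmp C k h1 = cmp C k h2 \<Longrightarrow> h1 = h2"
proof -
  assume a: "is_kernel C X Y f K k" "h1 \<in> hom C W K" "h2 \<in> hom C W K" "cmp C k h1 = cmp C k h2"
  have k: "k \<in> hom C K X" "f \<in> hom C X Y" "cmp C f k = zer C K Y" "K \<in> Ob C"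
    using kernel_hom[OF a(1)] by blast+
  note U = kernel_U[OF a(1)]
  have Y: "Y \<in> Ob C" using k(2) by (metis cod_Ob hom_iff)
  have W: "W \<in> Ob C" using a(2) by (metis dom_Ob hom_iff)
  have "cmp C f (cmp C k h1) = zer C W Y" using k a Y W cmp_assoc_eq[of k f h1 "zer C K Y"] by simp
  moreover have "cmp C k h1 \<in> hom C W X" using k a by simp
  ultimately have H: "cmp C k h1 \<in> hom C W X \<and> cmp C f (cmp C k h1) = zer C W Y" by blast
  note E = U[rule_format, OF H]
  show ?thesis apply (rule ex1_uniq[OF E]) using a(2,3,4) by auto
qed

lemma kernel_factor: "is_kernel C X Y f K k \<Longrightarrow> g \<in> hom C W X \<Longrightarrow> cmp C f g = zer C W Y \<Longrightarrow>
   \<exists>h. h \<in> hom C W K \<and> cmp C k h = g"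
proof -
  assume a: "is_kernel C X Y f K k" "g \<in> hom C W X" "cmp C f g = zer C W Y"
  have "\<exists>!h. h \<in> hom C W K \<and> cmp C k h = g" using kernel_U[OF a(1), rule_format, OF conjI[OF a(2,3)]] .
  then show ?thesis by (rule ex1_implies_ex)
qed

end

locale stab = pa C for C :: "('o,'m) cat" + fixes T :: "'o set"
  assumes addi: "additive C" and cl: "closed_additive_subcat C T"
begin

definition nul :: "'o \<Rightarrow> 'o \<Rightarrow> 'm \<Rightarrow> bool" where
  "nul A B x \<longleftrightarrow> x \<in> hom C A B \<and> (\<exists>W\<in>T. \<exists>u\<in>hom C A W. \<exists>v\<in>hom C W B. x = cmp C v u)"

lemma T_Ob: "W \<in> T \<Longrightarrow> W \<in> Ob C"
  using cl unfolding closed_additive_subcat_def by blast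

lemma zero_in_T: "\<exists>Z. Z \<in> T \<and> Z \<in> Ob C"
proof -
  obtain Z where "zero_obj C Z" using addi unfolding additive_def by blast
  then show ?thesis using cl unfolding closed_additive_subcat_def zero_obj_def by blast
qed

lemma T_biprod: "is_biproduct C X Y B i1 i2 p1 p2 \<Longrightarrow> (B \<in> T \<longleftrightarrow> X \<in> T \<and> Y \<in> T)"
proof -
  have "\<forall>X Y B i1 i2 p1 p2. is_biproduct C X Y B i1 i2 p1 p2 \<longrightarrow> (B \<in> T \<longleftrightarrow> X \<in> T \<and> Y \<in> T)"
    using cl unfolding closed_additive_subcat_def by (elim conjE) assumption
  then show "is_biproduct C X Y B i1 i2 p1 p2 \<Longrightarrow> (B \<in> T \<longleftrightarrow> X \<in> T \<and> Y \<in> T)" by blast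
qed

lemma nul_zer: "A \<in> Ob C \<Longrightarrow> B \<in> Ob C \<Longrightarrow> nul A B (zer C A B)"
proof -
  assume a: "A \<in> Ob C" "B \<in> Ob C"
  obtain Z where Z: "Z \<in> T" "Z \<in> Ob C" using zero_in_T by blast
  have "zer C A B = cmp C (zer C Z B) (zer C A Z)" using a Z by simp
  then show ?thesis unfolding nul_def using a Z
    by (intro conjI bexI[of _ Z] bexI[of _ "zer C A Z"] bexI[of _ "zer C Z B"]) simp_all
qed

lemma nul_hom: "nul A B x \<Longrightarrow> x \<in> hom C A B" unfolding nul_def by blast

lemma nul_cmp_left: "nul A B x \<Longrightarrow> h \<in> hom C B D \<Longrightarrow> nul A D (cmp C h x)"
proof -
  assume a: "nul A B x" "h \<in> hom C B D"
  then obtain W u v where W: "W \<in> T" "u \<in> hom C A W" "v \<in> hom C W B" "x = cmp C v u"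
    unfolding nul_def by blast
  have "cmp C h x = cmp C (cmp C h v) u" using W a by simp
  then show ?thesis unfolding nul_def using W a
    by (intro conjI bexI[of _ W] bexI[of _ u] bexI[of _ "cmp C h v"]) simp_all
qed

lemma nul_cmp_right: "nul A B x \<Longrightarrow> h \<in> hom C D A \<Longrightarrow> nul D B (cmp C x h)"
proof -
  assume a: "nul A B x" "h \<in> hom C D A"
  then obtain W u v where W: "W \<in> T" "u \<in> hom C A W" "v \<in> hom C W B" "x = cmp C v u"
    unfolding nul_def by blast
  have "cmp C x h = cmp C v (cmp C u h)" using W a by simp
  then show ?thesis unfolding nul_def using W a
    by (intro conjI bexI[of _ W] bexI[of _ "cmp C u h"] bexI[of _ v]) simp_all
qed

lemma nul_neg: "nul A B x \<Longrightarrow> nul A B (neg C x)"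
proof -
  assume a: "nul A B x"
  then obtain W u v where W: "W \<in> T" "u \<in> hom C A W" "v \<in> hom C W B" "x = cmp C v u"
    unfolding nul_def by blast
  have "neg C x = cmp C (neg C v) u" using W a by simp
  then show ?thesis unfolding nul_def using W a
    by (intro conjI bexI[of _ W] bexI[of _ u] bexI[of _ "neg C v"]) simp_all
qed

lemma nul_dom: "A \<in> T \<Longrightarrow> x \<in> hom C A B \<Longrightarrow> nul A B x"
  unfolding nul_def using T_Ob
  by (intro conjI bexI[of _ A] bexI[of _ "idt C A"] bexI[of _ x]) auto

lemma nul_cod: "B \<in> T \<Longrightarrow> x \<in> hom C A B \<Longrightarrow> nul A B x"
  unfolding nul_def using T_Ob
  by (intro conjI bexI[of _ B] bexI[of _ x] bexI[of _ "idt C B"]) auto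

lemma nul_via: "nul Z Z (idt C Z) \<Longrightarrow> a \<in> hom C A Z \<Longrightarrow> b \<in> hom C Z B \<Longrightarrow> nul A B (cmp C b a)"
proof -
  assume a: "nul Z Z (idt C Z)" "a \<in> hom C A Z" "b \<in> hom C Z B"
  have "nul A Z (cmp C (idt C Z) a)" using nul_cmp_right a by blast
  then have "nul A Z a" using a by simp
  then show ?thesis using nul_cmp_left a by blast
qed

lemma nul_add: "nul A B x \<Longrightarrow> nul A B y \<Longrightarrow> nul A B (add C x y)"
proof -
  assume a: "nul A B x" "nul A B y"
  then obtain W1 u1 v1 where W1: "W1 \<in> T" "u1 \<in> hom C A W1" "v1 \<in> hom C W1 B" "x = cmp C v1 u1"
    unfolding nul_def by blast
  obtain W2 u2 v2 where W2: "W2 \<in> T" "u2 \<in> hom C A W2" "v2 \<in> hom C W2 B" "y = cmp C v2 u2"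
    using a unfolding nul_def by blast
  have O: "W1 \<in> Ob C" "W2 \<in> Ob C" using W1 W2 T_Ob by auto
  then obtain D i1 i2 p1 p2 where D: "is_biproduct C W1 W2 D i1 i2 p1 p2"
    using addi unfolding additive_def by blast
  have DT: "D \<in> T" using D W1 W2 T_biprod by blast
  have Dh: "D \<in> Ob C" "i1 \<in> hom C W1 D" "i2 \<in> hom C W2 D" "p1 \<in> hom C D W1" "p2 \<in> hom C D W2"
     "cmp C p1 i1 = idt C W1" "cmp C p2 i2 = idt C W2"
     "cmp C p1 i2 = zer C W2 W1" "cmp C p2 i1 = zer C W1 W2"
    using D unfolding is_biproduct_def by blast+
  have AB: "A \<in> Ob C" "B \<in> Ob C" using W1 by auto
  define u where "u = add C (cmp C i1 u1) (cmp C i2 u2)"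
  define v where "v = add C (cmp C v1 p1) (cmp C v2 p2)"
  have uh: "u \<in> hom C A D" unfolding u_def using W1 W2 Dh by simp
  have vh: "v \<in> hom C D B" unfolding v_def using W1 W2 Dh by simp
  have e1: "cmp C p1 (cmp C i1 u1) = u1" using cmp_assoc_eq[of i1 p1 u1] W1 W2 Dh by simp
  have e2: "cmp C p2 (cmp C i2 u2) = u2" using cmp_assoc_eq[of i2 p2 u2] W1 W2 Dh by simp
  have e3: "cmp C p1 (cmp C i2 u2) = zer C A W1" using cmp_assoc_eq[of i2 p1 u2] W1 W2 Dh O AB by simp
  have e4: "cmp C p2 (cmp C i1 u1) = zer C A W2" using cmp_assoc_eq[of i1 p2 u1] W1 W2 Dh O AB by simp
  have "cmp C v u = add C x y" unfolding u_def v_def using W1 W2 Dh e1 e2 e3 e4 O AB by simp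
  then show ?thesis unfolding nul_def using DT uh vh W1 W2
    by (intro conjI bexI[of _ D] bexI[of _ u] bexI[of _ v]) simp_all
qed

lemma precover_lift: "T_precover C T Y TY p \<Longrightarrow> nul W Y x \<Longrightarrow> \<exists>y\<in>hom C W TY. x = cmp C p y"
proof -
  assume a: "T_precover C T Y TY p" "nul W Y x"
  then obtain V u v where V: "V \<in> T" "u \<in> hom C W V" "v \<in> hom C V Y" "x = cmp C v u"
    unfolding nul_def by blast
  have p: "TY \<in> T" "p \<in> hom C TY Y" "\<forall>W t. W \<in> T \<longrightarrow> t \<in> hom C W Y \<longrightarrow> (\<exists>u\<in>hom C W TY. cmp C p u = t)"
    using a(1) unfolding T_precover_def by blast+
  obtain v' where v': "v' \<in> hom C V TY" "cmp C p v' = v" using p V by blast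
  have "x = cmp C p (cmp C v' u)" using V v' p cmp_assoc_eq[of v' p u v] by simp
  then show ?thesis using V v' by (intro bexI[of _ "cmp C v' u"]) simp_all
qed

lemma stable_eq_nul: "stable_eq C T X Y f g \<longleftrightarrow> f \<in> hom C X Y \<and> g \<in> hom C X Y \<and> nul X Y (add C f (neg C g))"
  unfolding stable_eq_def nul_def by auto

lemma sub_eq: "x \<in> hom C A B \<Longrightarrow> y \<in> hom C A B \<Longrightarrow> add C x (neg C y) = z \<Longrightarrow> add C x (neg C z) = y"
  by auto

lemma nul_from_diff: "x \<in> hom C A B \<Longrightarrow> y \<in> hom C A B \<Longrightarrow> nul A B (add C x (neg C y)) \<Longrightarrow> nul A B x \<Longrightarrow> nul A B y"
proof -
  assume a: "x \<in> hom C A B" "y \<in> hom C A B" "nul A B (add C x (neg C y))" "nul A B x"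
  have "nul A B (add C x (neg C (add C x (neg C y))))" using a nul_add nul_neg by blast
  then show ?thesis using a by simp
qed

lemma nul_from_diff2: "x \<in> hom C A B \<Longrightarrow> y \<in> hom C A B \<Longrightarrow> nul A B (add C x (neg C y)) \<Longrightarrow> nul A B y \<Longrightarrow> nul A B x"
proof -
  assume a: "x \<in> hom C A B" "y \<in> hom C A B" "nul A B (add C x (neg C y))" "nul A B y"
  have "nul A B (add C (add C x (neg C y)) y)" using a nul_add by blast
  then show ?thesis using a by simp
qed

lemma seq_refl: "x \<in> hom C A B \<Longrightarrow> stable_eq C T A B x x"
  unfolding stable_eq_nul using nul_zer hom_Ob[of x A B] by simp

lemma seq_sym: "stable_eq C T A B x y \<Longrightarrow> stable_eq C T A B y x"
proof -
  assume a: "stable_eq C T A B x y"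
  then have h: "x \<in> hom C A B" "y \<in> hom C A B" and n: "nul A B (add C x (neg C y))"
    unfolding stable_eq_nul by blast+
  have "nul A B (neg C (add C x (neg C y)))" using nul_neg n by blast
  moreover have "neg C (add C x (neg C y)) = add C y (neg C x)" using h by (simp add: add_comm)
  ultimately show ?thesis using h unfolding stable_eq_nul by simp
qed

lemma seq_trans: "stable_eq C T A B x y \<Longrightarrow> stable_eq C T A B y z \<Longrightarrow> stable_eq C T A B x z"
proof -
  assume a: "stable_eq C T A B x y" "stable_eq C T A B y z"
  then have h: "x \<in> hom C A B" "y \<in> hom C A B" "z \<in> hom C A B" unfolding stable_eq_nul by blast+
  have "nul A B (add C (add C x (neg C y)) (add C y (neg C z)))" using a nul_add unfolding stable_eq_nul by blast
  then show ?thesis using h unfolding stable_eq_nul by simp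
qed

lemma seq_cmp_left: "stable_eq C T A B x y \<Longrightarrow> h \<in> hom C B D \<Longrightarrow> stable_eq C T A D (cmp C h x) (cmp C h y)"
proof -
  assume a: "stable_eq C T A B x y" "h \<in> hom C B D"
  then have h: "x \<in> hom C A B" "y \<in> hom C A B" unfolding stable_eq_nul by blast+
  have "nul A D (cmp C h (add C x (neg C y)))" using a nul_cmp_left unfolding stable_eq_nul by blast
  then show ?thesis using h a(2) unfolding stable_eq_nul by simp
qed

lemma seq_cmp_right: "stable_eq C T A B x y \<Longrightarrow> h \<in> hom C D A \<Longrightarrow> stable_eq C T D B (cmp C x h) (cmp C y h)"
proof -
  assume a: "stable_eq C T A B x y" "h \<in> hom C D A"
  then have h: "x \<in> hom C A B" "y \<in> hom C A B" unfolding stable_eq_nul by blast+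
  have "nul D B (cmp C (add C x (neg C y)) h)" using a nul_cmp_right unfolding stable_eq_nul by blast
  then show ?thesis using h a(2) unfolding stable_eq_nul by simp
qed

lemma seq_nul: "stable_eq C T A B x y \<Longrightarrow> nul A B y \<Longrightarrow> nul A B x"
  unfolding stable_eq_nul using nul_from_diff2 by blast

lemma seq_T: "x \<in> hom C A B \<Longrightarrow> y \<in> hom C A B \<Longrightarrow> A \<in> T \<or> B \<in> T \<Longrightarrow> stable_eq C T A B x y"
proof -
  assume a: "x \<in> hom C A B" "y \<in> hom C A B" "A \<in> T \<or> B \<in> T"
  have "add C x (neg C y) \<in> hom C A B" using a by simp
  then show ?thesis using a nul_dom nul_cod unfolding stable_eq_nul by blast
qed

lemma nul_to_id: "nul A A (idt C A) \<Longrightarrow> A \<in> Ob C \<Longrightarrow> abelian C \<Longrightarrow> A \<in> T"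
proof -
  assume a: "nul A A (idt C A)" "A \<in> Ob C" "abelian C"
  obtain W u v where W: "W \<in> T" "u \<in> hom C A W" "v \<in> hom C W A" "cmp C v u = idt C A"
    using a(1) unfolding nul_def by (metis (no_types))
  have WO: "W \<in> Ob C" using W T_Ob by blast
  obtain K' k' where K: "is_kernel C W A v K' k'" using a(3) W unfolding abelian_def by blast
  have kh: "k' \<in> hom C K' W" "cmp C v k' = zer C K' A" "K' \<in> Ob C" using kernel_hom[OF K] by blast+
  define e where "e = add C (idt C W) (neg C (cmp C u v))"
  have eh: "e \<in> hom C W W" unfolding e_def using W WO by simp
  have vu: "cmp C v (cmp C u x) = x" if "x \<in> hom C X0 A" for x X0
    using cmp_assoc_eq[of u v x "idt C A"] W that a(2) by simp
  have vuv: "cmp C v (cmp C u v) = v" using vu[of v] W by simp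
  have ve: "cmp C v e = zer C W A" unfolding e_def using W WO a(2) vuv by simp
  obtain p2 where p2: "p2 \<in> hom C W K'" "cmp C k' p2 = e" using kernel_factor[OF K eh ve] by blast
  have kp2: "cmp C k' (cmp C p2 x) = cmp C e x" if "x \<in> hom C X0 W" for x X0
    using cmp_assoc_eq[of p2 k' x e] p2 kh that by simp
  have vk: "cmp C v (cmp C k' x) = zer C X0 A" if "x \<in> hom C X0 K'" for x X0
    using cmp_assoc_eq[of k' v x "zer C K' A"] kh W that a(2) by simp
  have 1: "cmp C p2 k' = idt C K'"
  proof (rule kernel_mono[OF K])
    show "cmp C p2 k' \<in> hom C K' K'" "idt C K' \<in> hom C K' K'" using p2 kh by simp_all
    have "cmp C k' (cmp C p2 k') = cmp C e k'" using kp2[of k'] kh by simp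
    also have "\<dots> = k'" unfolding e_def using kh W WO vk[of "idt C K'"] a(2) by simp
    finally show "cmp C k' (cmp C p2 k') = cmp C k' (idt C K')" using kh by simp
  qed
  have 2: "cmp C p2 u = zer C A K'"
  proof (rule kernel_mono[OF K])
    show "cmp C p2 u \<in> hom C A K'" "zer C A K' \<in> hom C A K'" using p2 kh W a(2) by simp_all
    have "cmp C k' (cmp C p2 u) = cmp C e u" using kp2[of u] W by simp
    also have "\<dots> = zer C A W" unfolding e_def using W WO vu[of "idt C A"] a(2)
      by (simp add: cmp_assoc_eq[of v u u "idt C A"])
    finally show "cmp C k' (cmp C p2 u) = cmp C k' (zer C A K')" using kh a(2) W by simp
  qed
  have 3: "add C (cmp C u v) (cmp C k' p2) = idt C W" using p2 W WO unfolding e_def by (simp add: add_ac)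
  have "is_biproduct C A K' W u k' v p2"
    unfolding is_biproduct_def using W WO kh p2 1 2 3 a(2) by simp
  then show ?thesis using T_biprod W by blast
qed

end

locale ab = stab C T for C :: "('o,'m) cat" and T :: "'o set" +
  assumes abel: "abelian C" and proj: "\<forall>P\<in>T. projective C P" and cfin: "contravariantly_finite C T"
begin

lemma ab_kernel: "f \<in> hom C X Y \<Longrightarrow> \<exists>K k. is_kernel C X Y f K k"
proof -
  have "\<forall>X Y f. f \<in> hom C X Y \<longrightarrow> (\<exists>K k. is_kernel C X Y f K k)"
    using abel unfolding abelian_def by (elim conjE) assumption
  then show "f \<in> hom C X Y \<Longrightarrow> \<exists>K k. is_kernel C X Y f K k" by blast
qed

lemma epi_hom: "epi C X Y f \<Longrightarrow> f \<in> hom C X Y" unfolding epi_def by blast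

lemma proj_lift: "P \<in> T \<Longrightarrow> epi C M N e \<Longrightarrow> g \<in> hom C P N \<Longrightarrow> \<exists>h\<in>hom C P M. cmp C e h = g"
proof -
  assume a: "P \<in> T" "epi C M N e" "g \<in> hom C P N"
  have "\<forall>M N e g. epi C M N e \<longrightarrow> g \<in> hom C P N \<longrightarrow> (\<exists>h\<in>hom C P M. cmp C e h = g)"
    using proj a(1) unfolding projective_def by blast
  then show ?thesis using a by blast
qed

lemma precover_ex: "Y \<in> Ob C \<Longrightarrow> \<exists>TY p. T_precover C T Y TY p"
  using cfin unfolding contravariantly_finite_def by blast

lemma precover_hom: "T_precover C T Y TY p \<Longrightarrow> TY \<in> T \<and> p \<in> hom C TY Y"
  unfolding T_precover_def by blast

lemma zero_ex: "\<exists>Z. zero_obj C Z \<and> Z \<in> T \<and> Z \<in> Ob C"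
proof -
  obtain Z where "zero_obj C Z" using addi unfolding additive_def by blast
  moreover have "\<forall>Z. zero_obj C Z \<longrightarrow> Z \<in> T" using cl unfolding closed_additive_subcat_def by (elim conjE) assumption
  ultimately show ?thesis unfolding zero_obj_def by blast
qed

lemma biprod_ex: "X \<in> Ob C \<Longrightarrow> Y \<in> Ob C \<Longrightarrow> \<exists>B i1 i2 p1 p2. is_biproduct C X Y B i1 i2 p1 p2"
  using addi unfolding additive_def by blast

lemma backward:
  assumes epi: "epi C X Y f" and ker: "is_kernel C X Y f K k" and KT: "K \<in> T"
  shows "strong_mono C T X Y f"
proof -
  have fh: "f \<in> hom C X Y" using epi epi_hom by blast
  have kh: "k \<in> hom C K X" "cmp C f k = zer C K Y" "K \<in> Ob C" using kernel_hom[OF ker] by blast+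
  have XY: "X \<in> Ob C" "Y \<in> Ob C" using hom_Ob[OF fh] by blast+
  obtain TY p where pc: "T_precover C T Y TY p" using precover_ex XY by blast
  have ph: "TY \<in> T" "p \<in> hom C TY Y" using precover_hom[OF pc] by blast+
  have TYO: "TY \<in> Ob C" using ph T_Ob by blast
  note [simp] = fh[simplified] kh[simplified] XY ph(2)[simplified] TYO
  obtain K' k' where ker': "is_kernel C TY Y p K' k'" using ab_kernel ph by blast
  have k'h: "k' \<in> hom C K' TY" "cmp C p k' = zer C K' Y" "K' \<in> Ob C" using kernel_hom[OF ker'] by blast+
  obtain Z0 where Z0: "zero_obj C Z0" "Z0 \<in> T" "Z0 \<in> Ob C" using zero_ex by blast
  obtain a where a: "a \<in> hom C TY X" "cmp C f a = p" using proj_lift[OF ph(1) epi ph(2)] by blast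
  obtain B i1 i2 p1 p2 where B: "is_biproduct C K TY B i1 i2 p1 p2" using biprod_ex kh TYO by blast
  have BT: "B \<in> T" using T_biprod[OF B] KT ph by blast
  have Bh: "B \<in> Ob C" "i1 \<in> hom C K B" "i2 \<in> hom C TY B" "p1 \<in> hom C B K" "p2 \<in> hom C B TY"
     "cmp C p1 i1 = idt C K" "cmp C p2 i2 = idt C TY"
     "cmp C p1 i2 = zer C TY K" "cmp C p2 i1 = zer C K TY"
     "add C (cmp C i1 p1) (cmp C i2 p2) = idt C B"
    using B unfolding is_biproduct_def by blast+
  define g where "g = add C (cmp C k p1) (cmp C a p2)"
  have gh: "g \<in> hom C B X" unfolding g_def using kh a Bh by simp
  have fk: "cmp C f (cmp C k x) = zer C W Y" if "x \<in> hom C W K" for x W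
    using cmp_assoc_eq[of k f x "zer C K Y"] kh fh that XY hom_Ob[OF that] by simp
  have fa: "cmp C f (cmp C a x) = cmp C p x" if "x \<in> hom C W TY" for x W
    using cmp_assoc_eq[of a f x p] a fh that by simp
  have p1i1: "cmp C p1 (cmp C i1 x) = x" if "x \<in> hom C W K" for x W
    using cmp_assoc_eq[of i1 p1 x "idt C K"] Bh that by simp
  have p2i2: "cmp C p2 (cmp C i2 x) = x" if "x \<in> hom C W TY" for x W
    using cmp_assoc_eq[of i2 p2 x "idt C TY"] Bh that by simp
  have p1i2: "cmp C p1 (cmp C i2 x) = zer C W K" if "x \<in> hom C W TY" for x W
    using cmp_assoc_eq[of i2 p1 x "zer C TY K"] Bh that kh TYO hom_Ob[OF that] by simp
  have p2i1: "cmp C p2 (cmp C i1 x) = zer C W TY" if "x \<in> hom C W K" for x W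
    using cmp_assoc_eq[of i1 p2 x "zer C K TY"] Bh that kh TYO hom_Ob[OF that] by simp
  have fg: "cmp C f g = cmp C p p2" unfolding g_def
    using fk[of p1] fa[of p2] Bh kh a fh XY ph TYO by simp
  have PB: "is_pullback C X Y TY f p B g p2"
    unfolding is_pullback_def
  proof (intro conjI allI impI)
    show "f \<in> hom C X Y" "p \<in> hom C TY Y" "B \<in> Ob C" "g \<in> hom C B X" "p2 \<in> hom C B TY"
      "cmp C f g = cmp C p p2" using fh ph Bh gh fg by blast+
    fix W \<alpha> \<beta> assume ab: "\<alpha> \<in> hom C W X" "\<beta> \<in> hom C W TY" "cmp C f \<alpha> = cmp C p \<beta>"
    have WO: "W \<in> Ob C" using hom_Ob[OF ab(1)] by blast
    have "cmp C f (add C \<alpha> (neg C (cmp C a \<beta>))) = zer C W Y"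
      using ab fa[of \<beta>] fh a XY WO by simp
    then obtain \<gamma> where \<gamma>: "\<gamma> \<in> hom C W K" "cmp C k \<gamma> = add C \<alpha> (neg C (cmp C a \<beta>))"
      using kernel_factor[OF ker] ab a by (metis add_hom neg_hom comp_hom)
    define h where "h = add C (cmp C i1 \<gamma>) (cmp C i2 \<beta>)"
    have hh: "h \<in> hom C W B" unfolding h_def using \<gamma> ab Bh by simp
    have gh_: "cmp C g h = \<alpha>" unfolding g_def h_def
      using \<gamma> ab Bh kh a p1i1[of \<gamma>] p2i2[of \<beta>] p1i2[of \<beta>] p2i1[of \<gamma>] WO XY TYO by simp
    have qh: "cmp C p2 h = \<beta>" unfolding h_def
      using \<gamma> ab Bh p2i2[of \<beta>] p2i1[of \<gamma>] WO TYO by simp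
    have uniq: "h' = h" if h': "h' \<in> hom C W B" "cmp C g h' = \<alpha>" "cmp C p2 h' = \<beta>" for h'
    proof -
      have dec: "x = add C (cmp C i1 (cmp C p1 x)) (cmp C i2 (cmp C p2 x))" if "x \<in> hom C W B" for x
      proof -
        have "x = cmp C (idt C B) x" using that by simp
        also have "\<dots> = cmp C (add C (cmp C i1 p1) (cmp C i2 p2)) x" using Bh by simp
        also have "\<dots> = add C (cmp C i1 (cmp C p1 x)) (cmp C i2 (cmp C p2 x))" using Bh(1-9) that by simp
        finally show ?thesis .
      qed
      have e1: "cmp C g x = add C (cmp C k (cmp C p1 x)) (cmp C a (cmp C p2 x))" if "x \<in> hom C W B" for x
        unfolding g_def using that kh a Bh by simp
      have "add C (cmp C k (cmp C p1 h')) (cmp C a \<beta>) = add C (cmp C k (cmp C p1 h)) (cmp C a \<beta>)"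
        using e1[OF h'(1)] e1[OF hh] h' gh_ qh by simp
      then have "cmp C k (cmp C p1 h') = cmp C k (cmp C p1 h)"
        using add_comm add_cancel_left kh a ab h' hh Bh
        by (smt (verit) cmp_Ar cod_cmp dom_cmp hom_iff)
      then have "cmp C p1 h' = cmp C p1 h" using kernel_mono[OF ker] h'(1) hh Bh by (metis comp_hom)
      then show "h' = h" using dec[OF h'(1)] dec[OF hh] h'(3) qh by simp
    qed
    show "\<exists>!h. h \<in> hom C W B \<and> cmp C g h = \<alpha> \<and> cmp C p2 h = \<beta>"
      using hh gh_ qh uniq by blast
  qed
  obtain w where w: "w \<in> hom C K' B" "cmp C g w = zer C K' X" "cmp C p2 w = k'"
  proof -
    have "zer C K' X \<in> hom C K' X" using k'h XY by simp
    moreover have "cmp C f (zer C K' X) = cmp C p k'" using k'h fh XY by simp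
    ultimately have "\<exists>!h. h \<in> hom C K' B \<and> cmp C g h = zer C K' X \<and> cmp C p2 h = k'"
      using PB k'h unfolding is_pullback_def by blast
    then show ?thesis using that by blast
  qed
  have std: "std_left_triangle C T K' B X Y w g f"
    unfolding std_left_triangle_def using pc ker' PB w by blast
  have siK: "stable_iso C T K' K' (idt C K')"
    unfolding stable_iso_def using seq_refl[of "idt C K'" K' K'] k'h by (intro conjI bexI[of _ "idt C K'"]) simp_all
  have siX: "stable_iso C T X X (idt C X)"
    unfolding stable_iso_def using seq_refl[of "idt C X" X X] XY by (intro conjI bexI[of _ "idt C X"]) simp_all
  have siY: "stable_iso C T Y Y (idt C Y)"
    unfolding stable_iso_def using seq_refl[of "idt C Y" Y Y] XY by (intro conjI bexI[of _ "idt C Y"]) simp_all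
  have siZ: "stable_iso C T Z0 B (zer C Z0 B)"
    unfolding stable_iso_def
  proof (intro conjI bexI[of _ "zer C B Z0"])
    show "zer C Z0 B \<in> hom C Z0 B" "zer C B Z0 \<in> hom C B Z0" using Z0 Bh by simp_all
    show "stable_eq C T Z0 Z0 (cmp C (zer C B Z0) (zer C Z0 B)) (idt C Z0)"
      by (rule seq_T) (use Z0 Bh in simp_all)
    show "stable_eq C T B B (cmp C (zer C Z0 B) (zer C B Z0)) (idt C B)"
      by (rule seq_T) (use BT Z0 Bh in simp_all)
  qed
  have sq1: "stable_eq C T K' B (cmp C w (idt C K')) (cmp C (zer C Z0 B) (zer C K' Z0))"
    by (rule seq_T) (use BT Z0 Bh w k'h in simp_all)
  have sq2: "stable_eq C T Z0 X (cmp C g (zer C Z0 B)) (cmp C (idt C X) (zer C Z0 X))"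
    by (rule seq_T) (use Z0 Bh gh XY in simp_all)
  have sq3: "stable_eq C T X Y (cmp C f (idt C X)) (cmp C (idt C Y) f)"
    using seq_refl[OF fh] fh by simp
  have lt: "left_triangle C T K' Z0 X Y (zer C K' Z0) (zer C Z0 X) f"
    unfolding left_triangle_def
    apply (intro conjI)
    using k'h Z0 XY fh apply simp_all[3]
    apply (rule exI[of _ K'], rule exI[of _ B], rule exI[of _ X], rule exI[of _ Y])
    apply (rule exI[of _ w], rule exI[of _ g], rule exI[of _ f])
    apply (rule exI[of _ "idt C K'"], rule exI[of _ "zer C Z0 B"], rule exI[of _ "idt C X"], rule exI[of _ "idt C Y"])
    using std siK siZ siX siY sq1 sq2 sq3 by blast
  show ?thesis unfolding strong_mono_def using fh pc ker' Z0 lt by blast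
qed

lemma forward:
  assumes epi: "epi C X Y f" and ker: "is_kernel C X Y f K k" and sm: "strong_mono C T X Y f"
  shows "K \<in> T"
proof -
  have fh: "f \<in> hom C X Y" using epi epi_hom by blast
  have kh: "k \<in> hom C K X" "cmp C f k = zer C K Y" "K \<in> Ob C" using kernel_hom[OF ker] by blast+
  have XY: "X \<in> Ob C" "Y \<in> Ob C" using hom_Ob[OF fh] by blast+
  note [simp] = fh[simplified] kh[simplified] XY
  obtain TY p K1 k1 Z0o where pc: "T_precover C T Y TY p" and ker1: "is_kernel C TY Y p K1 k1"
    and z: "zero_obj C Z0o" and lt: "left_triangle C T K1 Z0o X Y (zer C K1 Z0o) (zer C Z0o X) f"
    using sm unfolding strong_mono_def by blast
  have ph: "TY \<in> T" "p \<in> hom C TY Y" using precover_hom[OF pc] by blast+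
  have TYO: "TY \<in> Ob C" using ph T_Ob by blast
  have k1h: "k1 \<in> hom C K1 TY" "cmp C p k1 = zer C K1 Y" "K1 \<in> Ob C" using kernel_hom[OF ker1] by blast+
  have Z0oT: "Z0o \<in> T"
  proof -
    have "\<forall>Z. zero_obj C Z \<longrightarrow> Z \<in> T" using cl unfolding closed_additive_subcat_def by (elim conjE) assumption
    then show ?thesis using z by blast
  qed
  have Z0oO: "Z0o \<in> Ob C" using Z0oT T_Ob by blast
  note [simp] = ph(2)[simplified] TYO k1h[simplified] Z0oO
  obtain K0 Z0 X0 Y0 w0 g0 f0 \<phi>1 \<phi>2 \<phi>3 \<phi>4 where
    std: "std_left_triangle C T K0 Z0 X0 Y0 w0 g0 f0" and
    si2: "stable_iso C T Z0o Z0 \<phi>2" and si3: "stable_iso C T X X0 \<phi>3" and si4: "stable_iso C T Y Y0 \<phi>4" and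
    sq3: "stable_eq C T X Y0 (cmp C f0 \<phi>3) (cmp C \<phi>4 f)"
    using lt unfolding left_triangle_def by blast
  obtain T0 p0 k0 q0 where pc0: "T_precover C T Y0 T0 p0" and ker0: "is_kernel C T0 Y0 p0 K0 k0"
    and pb: "is_pullback C X0 Y0 T0 f0 p0 Z0 g0 q0" and w0: "w0 \<in> hom C K0 Z0" "cmp C g0 w0 = zer C K0 X0"
    "cmp C q0 w0 = k0"
    using std unfolding std_left_triangle_def by blast
  have p0h: "T0 \<in> T" "p0 \<in> hom C T0 Y0" using precover_hom[OF pc0] by blast+
  have T0O: "T0 \<in> Ob C" using p0h T_Ob by blast
  have k0h: "k0 \<in> hom C K0 T0" "cmp C p0 k0 = zer C K0 Y0" "K0 \<in> Ob C" using kernel_hom[OF ker0] by blast+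
  have pbh: "f0 \<in> hom C X0 Y0" "Z0 \<in> Ob C" "g0 \<in> hom C Z0 X0" "q0 \<in> hom C Z0 T0"
    "cmp C f0 g0 = cmp C p0 q0"
    using pb unfolding is_pullback_def by blast+
  have pbU: "\<forall>W a b. a \<in> hom C W X0 \<longrightarrow> b \<in> hom C W T0 \<longrightarrow> cmp C f0 a = cmp C p0 b \<longrightarrow>
        (\<exists>!h. h \<in> hom C W Z0 \<and> cmp C g0 h = a \<and> cmp C q0 h = b)"
    using pb unfolding is_pullback_def by (elim conjE) assumption
  have pbE: "\<exists>h. h \<in> hom C W Z0 \<and> cmp C g0 h = a \<and> cmp C q0 h = b"
    if "a \<in> hom C W X0" "b \<in> hom C W T0" "cmp C f0 a = cmp C p0 b" for W a b
    using pbU[rule_format, OF that] by (rule ex1_implies_ex)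
  have X0Y0: "X0 \<in> Ob C" "Y0 \<in> Ob C" using hom_Ob[OF pbh(1)] by blast+
  note [simp] = p0h(2)[simplified] T0O k0h[simplified] pbh[simplified] X0Y0 w0[simplified]
  obtain b2 where b2: "b2 \<in> hom C Z0 Z0o" "\<phi>2 \<in> hom C Z0o Z0"
     "stable_eq C T Z0 Z0 (cmp C \<phi>2 b2) (idt C Z0)"
    using si2 unfolding stable_iso_def by blast
  obtain \<psi>3 where s3: "\<phi>3 \<in> hom C X X0" "\<psi>3 \<in> hom C X0 X" "stable_eq C T X X (cmp C \<psi>3 \<phi>3) (idt C X)"
     "stable_eq C T X0 X0 (cmp C \<phi>3 \<psi>3) (idt C X0)"
    using si3 unfolding stable_iso_def by blast
  obtain \<psi>4 where s4: "\<phi>4 \<in> hom C Y Y0" "\<psi>4 \<in> hom C Y0 Y" "stable_eq C T Y Y (cmp C \<psi>4 \<phi>4) (idt C Y)"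
     "stable_eq C T Y0 Y0 (cmp C \<phi>4 \<psi>4) (idt C Y0)"
    using si4 unfolding stable_iso_def by blast
  note [simp] = b2(1,2)[simplified] s3(1,2)[simplified] s4(1,2)[simplified]

  have nulZ: "nul Z0 Z0 (idt C Z0)"
  proof -
    have "nul Z0o Z0 \<phi>2" using nul_dom[OF Z0oT b2(2)] .
    then have "nul Z0 Z0 (cmp C \<phi>2 b2)" using nul_cmp_right b2 by blast
    then show ?thesis using seq_nul[OF seq_sym[OF b2(3)]] by blast
  qed

  have nulk: "nul K X k"
  proof -
    have "stable_eq C T K Y0 (cmp C (cmp C f0 \<phi>3) k) (cmp C (cmp C \<phi>4 f) k)"
      using seq_cmp_right[OF sq3 kh(1)] .
    then have "stable_eq C T K Y0 (cmp C f0 (cmp C \<phi>3 k)) (zer C K Y0)" by simp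
    then have "nul K Y0 (cmp C f0 (cmp C \<phi>3 k))" using seq_nul nul_zer by simp
    then obtain b where b: "b \<in> hom C K T0" "cmp C f0 (cmp C \<phi>3 k) = cmp C p0 b"
      using precover_lift[OF pc0] by blast
    have "cmp C \<phi>3 k \<in> hom C K X0" by simp
    then obtain \<beta> where \<beta>: "\<beta> \<in> hom C K Z0" "cmp C g0 \<beta> = cmp C \<phi>3 k" using pbE b by blast
    have "nul K X0 (cmp C g0 \<beta>)" using nul_via[OF nulZ \<beta>(1) pbh(3)] .
    then have "nul K X (cmp C \<psi>3 (cmp C \<phi>3 k))" using \<beta>(2) nul_cmp_left[of K X0 _ \<psi>3 X] by simp
    moreover have "stable_eq C T K X (cmp C (cmp C \<psi>3 \<phi>3) k) (cmp C (idt C X) k)"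
      using seq_cmp_right[OF s3(3) kh(1)] .
    then have "stable_eq C T K X k (cmp C \<psi>3 (cmp C \<phi>3 k))" using seq_sym by simp
    ultimately show ?thesis using seq_nul by blast
  qed

  obtain a where a: "a \<in> hom C TY X" "cmp C f a = p" using proj_lift[OF ph(1) epi ph(2)] by blast
  note [simp] = a[simplified]
  have fa: "cmp C f (cmp C a x) = cmp C p x" if "x \<in> hom C W TY" for x W
    using cmp_assoc_eq[of a f x p] that by simp
  have "cmp C f (cmp C a k1) = zer C K1 Y" using fa[of k1] by simp
  then obtain lm where lm: "lm \<in> hom C K1 K" "cmp C k lm = cmp C a k1"
    using kernel_factor[OF ker, of "cmp C a k1" K1] by auto
  note [simp] = lm(1)[simplified]
  have klm: "cmp C k (cmp C lm x) = cmp C a (cmp C k1 x)" if "x \<in> hom C W K1" for x W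
    using cmp_assoc_eq[of lm k x "cmp C a k1"] that lm by simp
  have fpsi: "stable_eq C T X0 Y (cmp C f \<psi>3) (cmp C \<psi>4 f0)"
  proof -
    have "stable_eq C T X0 Y (cmp C (cmp C \<psi>4 \<phi>4) (cmp C f \<psi>3)) (cmp C (idt C Y) (cmp C f \<psi>3))"
      using seq_cmp_right[OF s4(3), of "cmp C f \<psi>3" X0] by simp
    then have 1: "stable_eq C T X0 Y (cmp C f \<psi>3) (cmp C \<psi>4 (cmp C \<phi>4 (cmp C f \<psi>3)))"
      using seq_sym by simp
    have "stable_eq C T X0 Y (cmp C \<psi>4 (cmp C (cmp C f0 \<phi>3) \<psi>3)) (cmp C \<psi>4 (cmp C (cmp C \<phi>4 f) \<psi>3))"
      using seq_cmp_left[OF seq_cmp_right[OF sq3, of \<psi>3 X0], of \<psi>4 Y] by simp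
    then have 2: "stable_eq C T X0 Y (cmp C \<psi>4 (cmp C \<phi>4 (cmp C f \<psi>3))) (cmp C \<psi>4 (cmp C f0 (cmp C \<phi>3 \<psi>3)))"
      using seq_sym by simp
    have "stable_eq C T X0 Y (cmp C (cmp C \<psi>4 f0) (cmp C \<phi>3 \<psi>3)) (cmp C (cmp C \<psi>4 f0) (idt C X0))"
      using seq_cmp_left[OF s3(4), of "cmp C \<psi>4 f0" Y] by simp
    then have 3: "stable_eq C T X0 Y (cmp C \<psi>4 (cmp C f0 (cmp C \<phi>3 \<psi>3))) (cmp C \<psi>4 f0)"
      by simp
    show ?thesis using seq_trans[OF seq_trans[OF 1 2] 3] .
  qed
  obtain r where r: "r \<in> hom C X0 TY" "add C (cmp C f \<psi>3) (neg C (cmp C \<psi>4 f0)) = cmp C p r"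
    using precover_lift[OF pc] fpsi unfolding stable_eq_nul by blast
  note [simp] = r(1)[simplified]
  define e where "e = add C \<psi>3 (neg C (cmp C a r))"
  have eh: "e \<in> hom C X0 X" unfolding e_def by simp
  note [simp] = eh[simplified]
  have fe: "cmp C f e = cmp C \<psi>4 f0"
  proof -
    have "cmp C f e = add C (cmp C f \<psi>3) (neg C (cmp C p r))" unfolding e_def using fa[of r] by simp
    then show ?thesis using sub_eq[OF _ _ r(2)] by simp
  qed
  have fe': "cmp C f (cmp C e x) = cmp C \<psi>4 (cmp C f0 x)" if "x \<in> hom C W X0" for x W
    using cmp_assoc_eq[of e f x "cmp C \<psi>4 f0"] that fe by simp
  obtain l where l: "l \<in> hom C T0 TY" "cmp C \<psi>4 p0 = cmp C p l"
    using precover_lift[OF pc nul_dom[OF p0h(1), of "cmp C \<psi>4 p0" Y]] by auto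
  note [simp] = l(1)[simplified]
  have pl: "cmp C p (cmp C l x) = cmp C \<psi>4 (cmp C p0 x)" if "x \<in> hom C W T0" for x W
    using cmp_assoc_eq[of l p x "cmp C \<psi>4 p0", OF _ _ _ _ _ l(2)[symmetric]] that by simp
  define c where "c = add C (cmp C e g0) (neg C (cmp C a (cmp C l q0)))"
  have ch: "c \<in> hom C Z0 X" unfolding c_def by simp
  have fc: "cmp C f c = zer C Z0 Y"
    unfolding c_def using fe'[of g0] fa[of "cmp C l q0"] pl[of q0] by simp
  obtain \<pi> where \<pi>: "\<pi> \<in> hom C Z0 K" "cmp C k \<pi> = c" using kernel_factor[OF ker ch fc] by blast
  note [simp] = \<pi>(1)[simplified]
  obtain \<phi>t where \<phi>t: "\<phi>t \<in> hom C TY T0" "cmp C \<phi>4 p = cmp C p0 \<phi>t"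
    using precover_lift[OF pc0 nul_dom[OF ph(1), of "cmp C \<phi>4 p" Y0]] by auto
  note [simp] = \<phi>t(1)[simplified]
  have p0phit: "cmp C p0 (cmp C \<phi>t x) = cmp C \<phi>4 (cmp C p x)" if "x \<in> hom C W TY" for x W
    using cmp_assoc_eq[of \<phi>t p0 x "cmp C \<phi>4 p", OF _ _ _ _ _ \<phi>t(2)[symmetric]] that by simp
  have "cmp C p0 (cmp C \<phi>t k1) = zer C K1 Y0" using p0phit[of k1] by simp
  then obtain \<omega> where \<omega>: "\<omega> \<in> hom C K1 K0" "cmp C k0 \<omega> = cmp C \<phi>t k1"
    using kernel_factor[OF ker0, of "cmp C \<phi>t k1" K1] by auto
  note [simp] = \<omega>(1)[simplified]
  obtain W4 U V where WUV: "W4 \<in> T" "U \<in> hom C Y W4" "V \<in> hom C W4 Y"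
      "add C (cmp C \<psi>4 \<phi>4) (neg C (idt C Y)) = cmp C V U"
    using s4(3) unfolding stable_eq_nul nul_def by blast
  have W4O: "W4 \<in> Ob C" using WUV T_Ob by blast
  note [simp] = WUV(2,3)[simplified] W4O
  obtain V' where V': "V' \<in> hom C W4 TY" "V = cmp C p V'"
    using precover_lift[OF pc nul_dom[OF WUV(1,3)]] by blast
  note [simp] = V'(1)[simplified]
  define z where "z = cmp C V' (cmp C U p)"
  have zh: "z \<in> hom C TY TY" unfolding z_def by simp
  note [simp] = zh[simplified]
  have VU: "cmp C V (cmp C U x) = add C (cmp C \<psi>4 (cmp C \<phi>4 x)) (neg C x)" if "x \<in> hom C W Y" for x W
  proof -
    have "cmp C V (cmp C U x) = cmp C (add C (cmp C \<psi>4 \<phi>4) (neg C (idt C Y))) x"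
      using cmp_assoc_eq[of U V x "cmp C V U"] that by (simp only: WUV(4)) simp
    then show ?thesis using that by simp
  qed
  have pz: "cmp C p z = add C (cmp C \<psi>4 (cmp C \<phi>4 p)) (neg C p)"
  proof -
    have "cmp C p z = cmp C V (cmp C U p)" unfolding z_def
      using cmp_assoc_eq[of V' p "cmp C U p" V] V'(2) by simp
    then show ?thesis using VU[of p] by simp
  qed
  define d where "d = add C (idt C TY) (neg C (cmp C l \<phi>t))"
  have dh: "d \<in> hom C TY TY" unfolding d_def by simp
  note [simp] = dh[simplified]
  have pd: "cmp C p d = add C p (neg C (cmp C \<psi>4 (cmp C \<phi>4 p)))"
    unfolding d_def using pl[of \<phi>t] \<phi>t by simp
  have "cmp C p (add C d z) = zer C TY Y" using pd pz by simp
  then obtain \<chi> where \<chi>: "\<chi> \<in> hom C TY K1" "cmp C k1 \<chi> = add C d z"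
    using kernel_factor[OF ker1, of "add C d z" TY] by auto
  note [simp] = \<chi>(1)[simplified]
  have zk: "cmp C z k1 = zer C K1 TY" unfolding z_def by simp
  have lam: "lm = add C (cmp C lm (cmp C \<chi> k1)) (neg C (cmp C \<pi> (cmp C w0 \<omega>)))"
  proof (rule kernel_mono[OF ker])
    show "lm \<in> hom C K1 K" by simp
    show "add C (cmp C lm (cmp C \<chi> k1)) (neg C (cmp C \<pi> (cmp C w0 \<omega>))) \<in> hom C K1 K" by simp
    have A: "cmp C k (cmp C lm (cmp C \<chi> k1)) = add C (cmp C a k1) (neg C (cmp C a (cmp C l (cmp C \<phi>t k1))))"
    proof -
      have "cmp C k (cmp C lm (cmp C \<chi> k1)) = cmp C a (cmp C k1 (cmp C \<chi> k1))" using klm[of "cmp C \<chi> k1"] by simp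
      also have "\<dots> = cmp C a (cmp C (add C d z) k1)" using cmp_assoc_eq[of \<chi> k1 k1 "add C d z"] \<chi> by simp
      also have "\<dots> = add C (cmp C a k1) (neg C (cmp C a (cmp C l (cmp C \<phi>t k1))))"
        unfolding d_def using zk by simp
      finally show ?thesis .
    qed
    have B: "cmp C k (cmp C \<pi> (cmp C w0 \<omega>)) = neg C (cmp C a (cmp C l (cmp C \<phi>t k1)))"
    proof -
      have "cmp C k (cmp C \<pi> (cmp C w0 \<omega>)) = cmp C c (cmp C w0 \<omega>)"
        using cmp_assoc_eq[of \<pi> k "cmp C w0 \<omega>" c] \<pi> by simp
      also have "\<dots> = neg C (cmp C a (cmp C l (cmp C \<phi>t k1)))"
        unfolding c_def using cmp_assoc_eq[of w0 g0 \<omega> "zer C K0 X0"] cmp_assoc_eq[of w0 q0 \<omega> k0]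
          \<omega>(2) by simp
      finally show ?thesis .
    qed
    show "cmp C k lm = cmp C k (add C (cmp C lm (cmp C \<chi> k1)) (neg C (cmp C \<pi> (cmp C w0 \<omega>))))"
      using A B lm(2) by simp
  qed
  have nullm: "nul K1 K lm"
  proof -
    have "nul TY K (cmp C lm \<chi>)" using nul_dom[OF ph(1), of "cmp C lm \<chi>" K] by simp
    then have "nul K1 K (cmp C (cmp C lm \<chi>) k1)" using nul_cmp_right k1h(1) by blast
    then have 1: "nul K1 K (cmp C lm (cmp C \<chi> k1))" by simp
    have 2: "nul K1 K (cmp C \<pi> (cmp C w0 \<omega>))" using nul_via[OF nulZ, of "cmp C w0 \<omega>" K1 \<pi> K] by simp
    show ?thesis using nul_add[OF 1 nul_neg[OF 2]] lam by simp
  qed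

  obtain T' t s where ts: "T' \<in> T" "t \<in> hom C K T'" "s \<in> hom C T' X" "k = cmp C s t"
    using nulk unfolding nul_def by blast
  have T'O: "T' \<in> Ob C" using ts T_Ob by blast
  note [simp] = ts(2,3)[simplified] T'O
  obtain m where m: "m \<in> hom C T' TY" "cmp C f s = cmp C p m"
    using precover_lift[OF pc nul_dom[OF ts(1), of "cmp C f s" Y]] by auto
  note [simp] = m(1)[simplified]
  have "cmp C p (cmp C m t) = zer C K Y"
  proof -
    have "cmp C p (cmp C m t) = cmp C f (cmp C s t)"
      using cmp_assoc_eq[of m p t "cmp C f s", OF _ _ _ _ _ m(2)[symmetric]] by simp
    also have "\<dots> = zer C K Y" using kh(2) ts(4)[symmetric] by simp
    finally show ?thesis .
  qed
  then obtain n where n: "n \<in> hom C K K1" "cmp C k1 n = cmp C m t"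
    using kernel_factor[OF ker1, of "cmp C m t" K] by auto
  note [simp] = n(1)[simplified]
  have "cmp C f (add C s (neg C (cmp C a m))) = zer C T' Y" using fa[of m] m(2) by simp
  then obtain \<sigma> where \<sigma>: "\<sigma> \<in> hom C T' K" "cmp C k \<sigma> = add C s (neg C (cmp C a m))"
    using kernel_factor[OF ker, of "add C s (neg C (cmp C a m))" T'] by auto
  note [simp] = \<sigma>(1)[simplified]
  have idK: "idt C K = add C (cmp C \<sigma> t) (cmp C lm n)"
  proof (rule kernel_mono[OF ker])
    show "idt C K \<in> hom C K K" "add C (cmp C \<sigma> t) (cmp C lm n) \<in> hom C K K" by simp_all
    have A1: "cmp C k (add C (cmp C \<sigma> t) (cmp C lm n)) = add C (cmp C k (cmp C \<sigma> t)) (cmp C k (cmp C lm n))" by simp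
    have A2: "add C (cmp C k (cmp C \<sigma> t)) (cmp C k (cmp C lm n)) = add C (cmp C (add C s (neg C (cmp C a m))) t) (cmp C a (cmp C k1 n))"
      using cmp_assoc_eq[of \<sigma> k t "add C s (neg C (cmp C a m))"] \<sigma>(2) klm[of n] by simp
    have A3: "add C (cmp C (add C s (neg C (cmp C a m))) t) (cmp C a (cmp C k1 n)) = cmp C s t" using n(2) by simp
    have A4: "cmp C s t = cmp C k (idt C K)" using ts(4) by simp
    show "cmp C k (idt C K) = cmp C k (add C (cmp C \<sigma> t) (cmp C lm n))" by (simp only: A1 A2 A3 A4)
  qed
  have "nul K K (idt C K)"
  proof -
    have "nul K T' t" using nul_cod[OF ts(1) ts(2)] .
    then have 1: "nul K K (cmp C \<sigma> t)" using nul_cmp_left \<sigma>(1) by blast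
    have 2: "nul K K (cmp C lm n)" using nul_cmp_right[OF nullm n(1)] .
    show ?thesis using nul_add[OF 1 2] idK by simp
  qed
  then show ?thesis using nul_to_id abel kh(3) by blast
qed

end

theorem proposition5p2:
  fixes C :: "('o, 'm) cat" and T :: "'o set"
    and X Y K :: 'o and f k :: 'm
  assumes "abelian C"
    and "closed_additive_subcat C T"
    and "\<forall>P\<in>T. projective C P"
    and "contravariantly_finite C T"
    and "epi C X Y f"
    and "is_kernel C X Y f K k"
  shows "strong_mono C T X Y f \<longleftrightarrow> K \<in> T"
proof -
  have ad: "additive C" using assms(1) unfolding abelian_def by (elim conjE) assumption
  have pr: "preadditive C" using ad unfolding additive_def by (elim conjE) assumption
  interpret ab C T
    using pr ad assms(1-4) by (unfold_locales) assumption+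
  show ?thesis using forward[OF assms(5,6)] backward[OF assms(5,6)] by blast
qed

end
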